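(* Let $w,w'\in[0,1]$ with $w+w'=1$. For every interval $\textbf{A}=[\underline{a},\overline{a}]\in I(\mathbb{R})$, $(w\underline{a}+w'\overline{a})\odot[\underline{a},\overline{a}]\nprec\textbf{0}$.
   Context: $I(\mathbb{R})$ is the set of closed bounded intervals; for $\lambda\in\mathbb{R}$, $\lambda\odot[\underline{a},\overline{a}]=[\lambda\underline{a},\lambda\overline{a}]$ if $\lambda\ge0$ and $[\lambda\overline{a},\lambda\underline{a}]$ if $\lambda<0$; $\textbf{0}=[0,0]$. $\textbf{A}\prec\textbf{B}$ iff $\underline{a}\le\underline{b}$, $\overline{a}\le\overline{b}$ and $\textbf{A}\ne\textbf{B}$; $\nprec$ is its negation. *)

theory Defs
  imports Main "HOL.Real"
begin

typedef interval = "{p :: real \<times> real. fst p \<le> snd p}"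
  by auto

definition lo :: "interval \<Rightarrow> real" where "lo A = fst (Rep_interval A)"
definition hi :: "interval \<Rightarrow> real" where "hi A = snd (Rep_interval A)"

definition mk_interval :: "real \<Rightarrow> real \<Rightarrow> interval" where
  "mk_interval a b = Abs_interval (a, b)"

definition smult_I :: "real \<Rightarrow> interval \<Rightarrow> interval" (infixr "\<odot>" 75) where
  "c \<odot> A = (if c \<ge> 0 then mk_interval (c * lo A) (c * hi A)
             else mk_interval (c * hi A) (c * lo A))"

definition zero_I :: interval where "zero_I = mk_interval 0 0"

definition prec_I :: "interval \<Rightarrow> interval \<Rightarrow> bool" (infix "\<prec>" 50) where
  "A \<prec> B \<longleftrightarrow> lo A \<le> lo B \<and> hi A \<le> hi B \<and> A \<noteq> B"

end

theory Submission
  imports Defs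
begin

lemma lo_mk: "x \<le> y \<Longrightarrow> lo (mk_interval x y) = x"
  by (simp add: lo_def mk_interval_def Abs_interval_inverse)
lemma hi_mk: "x \<le> y \<Longrightarrow> hi (mk_interval x y) = y"
  by (simp add: hi_def mk_interval_def Abs_interval_inverse)
lemma lo_le_hi: "lo A \<le> hi A"
  using Rep_interval[of A] by (simp add: lo_def hi_def)

theorem lemma5p1:
  fixes w w' :: real and A :: interval
  assumes "0 \<le> w" "w \<le> 1" "0 \<le> w'" "w' \<le> 1" "w + w' = 1"
  shows "\<not> ((w * lo A + w' * hi A) \<odot> A \<prec> zero_I)"
proof
  define a where "a = lo A"
  define b where "b = hi A"
  define c where "c = w * lo A + w' * hi A"
  have ab: "a \<le> b" using lo_le_hi a_def b_def by simp
  have ca: "a \<le> c" unfolding c_def a_def[symmetric] b_def[symmetric]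
  proof -
    have "w * a + w' * a \<le> w * a + w' * b" using ab assms(3) by (simp add: mult_left_mono)
    thus "a \<le> w * a + w' * b" using assms(5) by (metis distrib_right mult_1)
  qed
  have cb: "c \<le> b" unfolding c_def a_def[symmetric] b_def[symmetric]
  proof -
    have "w * a + w' * b \<le> w * b + w' * b" using ab assms(1) by (simp add: mult_left_mono)
    thus "w * a + w' * b \<le> b" using assms(5) by (metis distrib_right mult_1)
  qed
  assume P: "(w * lo A + w' * hi A) \<odot> A \<prec> zero_I"
  hence P: "c \<odot> A \<prec> zero_I" by (simp add: c_def)
  have z: "lo zero_I = 0" "hi zero_I = 0" by (simp_all add: zero_I_def lo_mk hi_mk)
  show False
  proof (cases "c \<ge> 0")
    case True
    have le: "c * a \<le> c * b" using True ab by (simp add: mult_left_mono)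
    have e: "c \<odot> A = mk_interval (c * a) (c * b)" using True by (simp add: smult_I_def a_def b_def)
    show False
    proof (cases "c = 0")
      case True
      then show ?thesis using P e by (simp add: prec_I_def zero_I_def)
    next
      case False
      hence "c * b > 0" using True cb by (simp add: mult_pos_pos)
      then show ?thesis using P e le z by (simp add: prec_I_def hi_mk)
    qed
  next
    case False
    have le: "c * b \<le> c * a" using False ab by (simp add: mult_left_mono_neg)
    have e: "c \<odot> A = mk_interval (c * b) (c * a)" using False by (simp add: smult_I_def a_def b_def)
    have "c * a > 0" using False ca by (simp add: mult_neg_neg)
    then show ?thesis using P e le z by (simp add: prec_I_def hi_mk)
  qed
qed

end
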